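(* In the setting below, for each $n\in\mathbb{N}_0$ and $i,j=1,\dots,N$, $$|x_i(s)-x_j(t)|\le d(t_{2n})\quad\forall s,t\in[t_{2n},t_{2n+1}].$$
   Context: Setting: $N\ge2$; $\psi:\mathbb{R}^d\times\mathbb{R}^d\to\mathbb{R}$ positive, bounded, continuous, $K:=\|\psi\|_\infty$; $\{t_n\}_{n\in\mathbb{N}_0}$ increasing, nonnegative, $t_0=0$, $t_n\to\infty$; $\alpha(0)=1$, $\alpha=1$ on $(t_{2n},t_{2n+1})$, $\alpha=-1$ on $[t_{2n+1},t_{2n+2}]$; $\{x_i\}$ solves $x_i'(t)=\frac1{N-1}\sum_{j\ne i}\alpha(t)\psi(x_i(t),x_j(t))(x_j(t)-x_i(t))$, $t>0$, $x_i(0)=x_i^0\in\mathbb{R}^d$ (continuous, $C^1$ on each $(t_n,t_{n+1})$). $d(t):=\max_{i,j}|x_i(t)-x_j(t)|$. Standing assumptions: $t_{2n+2}-t_{2n+1}<\frac{\ln 2}{K}$ for all $n$; $\sum_{p\ge0}\ln\frac{e^{K(t_{2p+2}-t_{2p+1})}}{2-e^{K(t_{2p+2}-t_{2p+1})}}<\infty$; $\sum_{p\ge0}\ln\max\{1-e^{-K(t_{2p+1}-t_{2p})},1-\frac{\psi_0}{K}(1-e^{-K(t_{2p+1}-t_{2p})})\}=-\infty$, with $\psi_0=\min_{|y|,|z|\le M^0}\psi(y,z)$, $M^0=e^{K\sum_{p}(t_{2p+2}-t_{2p+1})}\max_i|x_i^0|$. *)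

theory Defs
  imports "HOL-Analysis.Analysis"
begin

definition alpha :: "(nat \<Rightarrow> real) \<Rightarrow> real \<Rightarrow> real" where
  "alpha tt s = (if s = 0 then 1
     else if (\<exists>n. tt (2*n) < s \<and> s < tt (2*n+1)) then 1 else -1)"

definition Kconst :: "('a \<Rightarrow> 'a \<Rightarrow> real) \<Rightarrow> real" where
  "Kconst psi = (SUP p\<in>UNIV. \<bar>psi (fst p) (snd p)\<bar>)"

definition diam :: "nat \<Rightarrow> (nat \<Rightarrow> real \<Rightarrow> 'a::real_normed_vector) \<Rightarrow> real \<Rightarrow> real" where
  "diam N x s = Max {norm (x i s - x j s) | i j. i \<in> {1..N} \<and> j \<in> {1..N}}"

definition rhs :: "nat \<Rightarrow> (nat \<Rightarrow> real) \<Rightarrow> ('a \<Rightarrow> 'a \<Rightarrow> real) \<Rightarrow> (nat \<Rightarrow> real \<Rightarrow> 'a::real_normed_vector) \<Rightarrow> nat \<Rightarrow> real \<Rightarrow> 'a" where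
  "rhs N tt psi x i s = (1 / (real N - 1)) *\<^sub>R
     (\<Sum>j\<in>{1..N} - {i}. (alpha tt s * psi (x i s) (x j s)) *\<^sub>R (x j s - x i s))"

definition M0 :: "nat \<Rightarrow> (nat \<Rightarrow> real) \<Rightarrow> ('a \<Rightarrow> 'a \<Rightarrow> real) \<Rightarrow> (nat \<Rightarrow> real \<Rightarrow> 'a::real_normed_vector) \<Rightarrow> real" where
  "M0 N tt psi x = exp (Kconst psi * (\<Sum>p. tt (2*p+2) - tt (2*p+1))) * Max ((\<lambda>i. norm (x i 0)) ` {1..N})"

definition psi0 :: "nat \<Rightarrow> (nat \<Rightarrow> real) \<Rightarrow> ('a \<Rightarrow> 'a \<Rightarrow> real) \<Rightarrow> (nat \<Rightarrow> real \<Rightarrow> 'a::real_normed_vector) \<Rightarrow> real" where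
  "psi0 N tt psi x = (INF p\<in>cball 0 (M0 N tt psi x) \<times> cball 0 (M0 N tt psi x). psi (fst p) (snd p))"

end

theory Submission
  imports Defs
begin

lemma dsq:
  fixes y :: "real \<Rightarrow> 'a::real_inner"
  assumes "(y has_vector_derivative v) (at s)"
  shows "((\<lambda>t. norm (y t - p)^2) has_real_derivative 2 * inner (y s - p) v) (at s)"
proof -
  have yd: "((\<lambda>t. y t - p) has_derivative (\<lambda>h. h *\<^sub>R v)) (at s)"
    using assms unfolding has_vector_derivative_def by (auto intro!: derivative_eq_intros)
  have "((\<lambda>t. inner (y t - p) (y t - p)) has_derivative (\<lambda>h. (2 * inner (y s - p) v) * h)) (at s)"
    by (rule has_derivative_eq_rhs, rule has_derivative_inner[OF yd yd]) (auto simp: inner_commute algebra_simps)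
  then show ?thesis
    by (simp add: power2_norm_eq_inner has_field_derivative_def)
qed
lemma key:
  fixes x :: "nat \<Rightarrow> real \<Rightarrow> 'a::real_inner" and D :: "nat \<Rightarrow> real \<Rightarrow> 'a"
  assumes fin: "finite I" and ab: "a < b" and R0: "0 \<le> R"
  and cont: "\<And>k. k\<in>I \<Longrightarrow> continuous_on {a..b} (x k)"
  and der: "\<And>k s. k\<in>I \<Longrightarrow> s\<in>{a<..<b} \<Longrightarrow> (x k has_vector_derivative D k s) (at s)"
  and sgn: "\<And>k s. k\<in>I \<Longrightarrow> s\<in>{a<..<b} \<Longrightarrow> (\<And>j. j\<in>I \<Longrightarrow> norm (x j s - p) \<le> norm (x k s - p)) \<Longrightarrow> inner (x k s - p) (D k s) \<le> 0"
  and init: "\<And>k. k\<in>I \<Longrightarrow> norm (x k a - p) \<le> R"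
  shows "\<And>k s. k\<in>I \<Longrightarrow> s\<in>{a..b} \<Longrightarrow> norm (x k s - p) \<le> R"
proof -
  define g where "g k s = norm (x k s - p)^2" for k s
  have gcont: "continuous_on {a..b} (g k)" if "k \<in> I" for k
    unfolding g_def using cont[OF that] by (intro continuous_intros)
  have gder: "(g k has_real_derivative 2 * inner (x k s - p) (D k s)) (at s)" if "k\<in>I" "s\<in>{a<..<b}" for k s
    unfolding g_def[abs_def] by (rule dsq[OF der[OF that]])
  have ginit: "g k a \<le> R^2" if "k \<in> I" for k
    unfolding g_def using init[OF that] by (simp add: power_mono)
  have main: "g k s < R^2 + e*(s-a) + e"
    if e: "e > 0" and c: "a \<le> c" "c < b" and k: "k \<in> I" and s: "s \<in> {a..c}" for e c k s
  proof (rule ccontr)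
    assume nk: "\<not> ?thesis"
    define S where "S = (\<Union>k\<in>I. {s\<in>{a..c}. R^2 + e*(s-a) + e \<le> g k s})"
    have "s \<in> S" using nk k s unfolding S_def by (auto simp: not_less)
    hence Sne: "S \<noteq> {}" by auto
    have Sbdd: "bdd_below S" unfolding S_def by (rule bdd_belowI[of _ a]) auto
    have "closed {s\<in>{a..c}. R^2 + e*(s-a) + e \<le> g k s}" if "k \<in> I" for k
      apply (rule continuous_on_closed_Collect_le)
      using gcont[OF that] c by (auto intro!: continuous_intros elim: continuous_on_subset)
    hence Scl: "closed S" unfolding S_def using fin by auto
    define t where "t = Inf S"
    have tS: "t \<in> S" unfolding t_def by (rule closed_contains_Inf[OF Sne Sbdd Scl])
    then obtain k where k: "k \<in> I" and tac: "t \<in> {a..c}" and gk: "R^2 + e*(t-a) + e \<le> g k t"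
      unfolding S_def by auto
    have "t \<noteq> a" using ginit[OF k] gk e by auto
    hence tgt: "a < t" using tac by auto
    have below: "g l u < R^2 + e*(u-a) + e" if "l \<in> I" "u \<in> {a..<t}" for l u
    proof (rule ccontr)
      assume "\<not> ?thesis"
      hence "u \<in> S" using that tac unfolding S_def by (auto simp: not_less)
      hence "t \<le> u" unfolding t_def using Sbdd by (rule cInf_lower)
      thus False using that by auto
    qed
    have gle: "g l t \<le> g k t" if l: "l \<in> I" for l
    proof -
      have "(\<lambda>u. g l u - (R^2 + e*(u-a) + e)) t \<le> 0"
      proof (rule continuous_le_on_closure[of "{a..<t}" "\<lambda>u. g l u - (R^2 + e*(u-a) + e)"])
        show "continuous_on (closure {a..<t}) (\<lambda>u. g l u - (R^2 + e*(u-a) + e))"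
          using tgt gcont[OF l] tac c by (auto intro!: continuous_intros elim: continuous_on_subset)
        show "t \<in> closure {a..<t}" using tgt by simp
        show "\<And>u. u \<in> {a..<t} \<Longrightarrow> g l u - (R^2 + e*(u-a) + e) \<le> 0"
          using below[OF l] by fastforce
      qed
      thus ?thesis using gk by simp
    qed
    have tab: "t \<in> {a<..<b}" using tgt tac c by auto
    have "norm (x j t - p) \<le> norm (x k t - p)" if "j \<in> I" for j
      using gle[OF that] unfolding g_def by (simp add: power2_le_iff_abs_le[symmetric] power_mono_iff)
    hence inn: "inner (x k t - p) (D k t) \<le> 0" using sgn[OF k tab] by blast
    have hder: "((\<lambda>u. g k u - (R^2 + e*(u-a) + e)) has_real_derivative 2 * inner (x k t - p) (D k t) - e) (at t)"
      using gder[OF k tab] by (auto intro!: derivative_eq_intros)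
    obtain d where d: "d > 0" and dd: "\<And>h. h > 0 \<Longrightarrow> h < d \<Longrightarrow> g k t - (R^2 + e*(t-a) + e) < g k (t-h) - (R^2 + e*((t-h)-a) + e)"
      using DERIV_neg_dec_left[OF hder] inn e by force
    define h where "h = min d (t-a) / 2"
    have h: "h > 0" "h < d" "h < t - a" using d tgt unfolding h_def by auto
    have "R^2 + e*((t-h)-a) + e < g k (t-h)" using dd[OF h(1,2)] gk by linarith
    hence "t - h \<in> S" using h tac k unfolding S_def by (auto intro: less_imp_le)
    hence "t \<le> t - h" unfolding t_def using Sbdd by (rule cInf_lower)
    thus False using h by auto
  qed
  have lessb: "g k s \<le> R^2" if k: "k \<in> I" and s: "s \<in> {a..<b}" for k s
  proof (rule field_le_epsilon)
    fix e :: real assume e: "e > 0"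
    define e' where "e' = e / (s - a + 1)"
    have e': "e' > 0" using e s unfolding e'_def by auto
    have 1: "g k s < R^2 + e'*(s-a) + e'" using main[OF e' _ _ k, of s s] s by auto
    have "e'*(s-a) + e' = e'*(s-a+1)" by (simp add: algebra_simps)
    also have "\<dots> = e" using s unfolding e'_def by simp
    finally show "g k s \<le> R^2 + e" using 1 by simp
  qed
  have allg: "g k s \<le> R^2" if k: "k \<in> I" and s: "s \<in> {a..b}" for k s
  proof (rule continuous_le_on_closure[of "{a..<b}" "g k"])
    show "continuous_on (closure {a..<b}) (g k)" using gcont[OF k] ab by simp
    show "s \<in> closure {a..<b}" using s ab by simp
  qed (rule lessb[OF k])
  fix k s assume ks: "k \<in> I" "s \<in> {a..b}"
  have "(norm (x k s - p))\<^sup>2 \<le> R\<^sup>2" using allg[OF ks] unfolding g_def .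
  then show "norm (x k s - p) \<le> R" using R0 by (rule power2_le_imp_le)
qed

lemma diam_ge:
  assumes "i \<in> {1..N}" "j \<in> {1..N}"
  shows "norm (x i s - x j s) \<le> diam N x s"
proof -
  have eq: "{norm (x i s - x j s) | i j. i \<in> {1..N} \<and> j \<in> {1..N}} = (\<lambda>(i,j). norm (x i s - x j s)) ` ({1..N} \<times> {1..N})"
    by (auto; blast)
  show ?thesis unfolding diam_def eq
    by (rule Max_ge) (use assms in auto)
qed

lemma sign_lemma:
  fixes u w :: "'a::real_inner"
  assumes "norm w \<le> norm u"
  shows "inner u (w - u) \<le> 0"
proof -
  have "inner u (w - u) = inner u w - norm u ^ 2" by (simp add: inner_diff_right power2_norm_eq_inner)
  also have "\<dots> \<le> norm u * norm w - norm u ^ 2" using norm_cauchy_schwarz[of u w] by simp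
  also have "\<dots> = norm u * (norm w - norm u)" by (simp add: algebra_simps power2_eq_square)
  also have "\<dots> \<le> 0" using assms by (simp add: mult_nonneg_nonpos)
  finally show ?thesis .
qed

theorem lemma3p2:
  fixes N :: nat and psi :: "'a::euclidean_space \<Rightarrow> 'a \<Rightarrow> real"
    and tt :: "nat \<Rightarrow> real" and x :: "nat \<Rightarrow> real \<Rightarrow> 'a"
  assumes N2: "N \<ge> 2"
    and psi_pos: "\<And>y z. psi y z > 0"
    and psi_bdd: "bounded (range (\<lambda>p. psi (fst p) (snd p)))"
    and psi_cont: "continuous_on UNIV (\<lambda>p. psi (fst p) (snd p))"
    and t_mono: "strict_mono tt" and t0: "tt 0 = 0"
    and t_lim: "filterlim tt at_top sequentially"
    and x_cont: "\<And>i. i \<in> {1..N} \<Longrightarrow> continuous_on {0..} (x i)"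
    and x_ode: "\<And>i n s. i \<in> {1..N} \<Longrightarrow> s \<in> {tt n<..<tt (Suc n)} \<Longrightarrow>
                  (x i has_vector_derivative rhs N tt psi x i s) (at s)"
    and A1: "\<And>n. tt (2*n+2) - tt (2*n+1) < ln 2 / Kconst psi"
    and A2: "summable (\<lambda>p. ln (exp (Kconst psi * (tt (2*p+2) - tt (2*p+1)))
                              / (2 - exp (Kconst psi * (tt (2*p+2) - tt (2*p+1))))))"
    and A3: "filterlim (\<lambda>m. \<Sum>p<m. ln (max (1 - exp (- Kconst psi * (tt (2*p+1) - tt (2*p))))
                 (1 - psi0 N tt psi x / Kconst psi * (1 - exp (- Kconst psi * (tt (2*p+1) - tt (2*p)))))))
               at_bot sequentially"
  shows "\<forall>n i j s \<tau>. i \<in> {1..N} \<longrightarrow> j \<in> {1..N} \<longrightarrow>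
           s \<in> {tt (2*n)..tt (2*n+1)} \<longrightarrow> \<tau> \<in> {tt (2*n)..tt (2*n+1)} \<longrightarrow>
           norm (x i s - x j \<tau>) \<le> diam N x (tt (2*n))"
proof (intro allI impI)
  fix n i j s \<tau>
  assume i: "i \<in> {1..N}" and j: "j \<in> {1..N}" and s: "s \<in> {tt (2*n)..tt (2*n+1)}"
    and \<tau>: "\<tau> \<in> {tt (2*n)..tt (2*n+1)}"
  define a where "a = tt (2*n)"
  define b where "b = tt (2*n+1)"
  have ab: "a < b" unfolding a_def b_def using t_mono by (simp add: strict_mono_less)
  have a0: "0 \<le> a" unfolding a_def using t0 t_mono by (metis le0 strict_mono_less_eq)
  have cont: "continuous_on {a..b} (x k)" if "k \<in> {1..N}" for k
    using x_cont[OF that] by (rule continuous_on_subset) (use a0 in auto)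
  have der: "(x k has_vector_derivative rhs N tt psi x k t) (at t)" if "k \<in> {1..N}" "t \<in> {a<..<b}" for k t
    using x_ode[OF that(1), of t "2*n"] that(2) unfolding a_def b_def by simp
  have sgn: "inner (x k t - p) (rhs N tt psi x k t) \<le> 0"
    if k: "k \<in> {1..N}" and t: "t \<in> {a<..<b}"
       and mx: "\<And>l. l \<in> {1..N} \<Longrightarrow> norm (x l t - p) \<le> norm (x k t - p)" for k t p
  proof -
    have ex: "\<exists>m. tt (2*m) < t \<and> t < tt (2*m+1)"
      using t unfolding a_def b_def by (intro exI[of _ n]) simp
    have "t \<noteq> 0" using t a0 by auto
    hence al: "alpha tt t = 1" unfolding alpha_def using ex by simp
    have "inner (x k t - p) (rhs N tt psi x k t) =
        (1 / (real N - 1)) * (\<Sum>l\<in>{1..N} - {k}. psi (x k t) (x l t) * inner (x k t - p) (x l t - x k t))"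
      unfolding rhs_def al by (simp add: inner_sum_right)
    also have "\<dots> \<le> 0"
    proof (rule mult_nonneg_nonpos)
      show "0 \<le> 1 / (real N - 1)" using N2 by simp
      show "(\<Sum>l\<in>{1..N} - {k}. psi (x k t) (x l t) * inner (x k t - p) (x l t - x k t)) \<le> 0"
      proof (rule sum_nonpos)
        fix l assume l: "l \<in> {1..N} - {k}"
        have "inner (x k t - p) ((x l t - p) - (x k t - p)) \<le> 0"
          by (rule sign_lemma) (use mx l in auto)
        hence "inner (x k t - p) (x l t - x k t) \<le> 0" by simp
        thus "psi (x k t) (x l t) * inner (x k t - p) (x l t - x k t) \<le> 0"
          using psi_pos[of "x k t" "x l t"] by (simp add: mult_nonneg_nonpos)
      qed
    qed
    finally show ?thesis .
  qed
  have d0: "0 \<le> diam N x a" using diam_ge[OF i i] by (rule order_trans[rotated]) simp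
  note K = key[of "{1..N}" a b "diam N x a" x "rhs N tt psi x", OF _ ab d0 cont der sgn]
  have step2: "norm (x j \<tau> - x k a) \<le> diam N x a" if k: "k \<in> {1..N}" for k
  proof (rule K[of "x k a" j \<tau>])
    show "finite {1..N}" by simp
    show "j \<in> {1..N}" by (rule j)
    show "\<tau> \<in> {a..b}" using \<tau> unfolding a_def b_def .
    show "norm (x l a - x k a) \<le> diam N x a" if "l \<in> {1..N}" for l
      by (rule diam_ge[OF that k])
  qed
  have "norm (x i s - x j \<tau>) \<le> diam N x a"
  proof (rule K[of "x j \<tau>" i s])
    show "finite {1..N}" by simp
    show "i \<in> {1..N}" by (rule i)
    show "s \<in> {a..b}" using s unfolding a_def b_def .
    show "norm (x l a - x j \<tau>) \<le> diam N x a" if "l \<in> {1..N}" for l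
      using step2[OF that] by (simp add: norm_minus_commute)
  qed
  thus "norm (x i s - x j \<tau>) \<le> diam N x (tt (2*n))" unfolding a_def .
qed

end
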